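(* Let $p$ be an odd prime. Then, modulo $p$, \[ (p-1)!!\equiv \operatorname{sf}(p-1)\equiv (-1)^{\frac{p-1}{2}}\, H(p-1) \pmod p. \]
   Context: For a natural number $n$, the double factorial $n!!$ is the product of the natural numbers less than or equal to $n$ that have the same parity as $n$. The superfactorial is $\operatorname{sf}(n)=\prod_{k=1}^{n} k!$. The hyperfactorial is $H(n)=\prod_{k=1}^{n} k^k$. *)

theory Defs
  imports "HOL-Number_Theory.Number_Theory"
begin

definition double_factorial :: "nat \<Rightarrow> nat" where
  "double_factorial n = (\<Prod>k \<in> {k \<in> {1..n}. even k = even n}. k)"

definition superfactorial :: "nat \<Rightarrow> nat" where
  "superfactorial n = (\<Prod>k = 1..n. fact k)"

definition hyperfactorial :: "nat \<Rightarrow> nat" where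
  "hyperfactorial n = (\<Prod>k = 1..n. k ^ k)"

end

theory Submission
  imports Defs
begin

lemma pair_prod:
  fixes f :: "nat \<Rightarrow> 'a::comm_monoid_mult"
  shows "(\<Prod>j\<in>{1..2*m}. f j) = (\<Prod>j\<in>{1..m}. f j * f (2*m+1-j))"
proof -
  have U: "{1..2*m} = {1..m} \<union> {m+1..2*m}" by auto
  have I: "{m+1..2*m} = (\<lambda>j. 2*m+1-j) ` {1..m}"
  proof (rule equalityI)
    show "{m+1..2*m} \<subseteq> (\<lambda>j. 2*m+1-j) ` {1..m}"
    proof
      fix x assume "x \<in> {m+1..2*m}"
      then have "x = 2*m+1-(2*m+1-x)" "2*m+1-x \<in> {1..m}" by auto
      then show "x \<in> (\<lambda>j. 2*m+1-j) ` {1..m}" by (rule image_eqI)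
    qed
  qed auto
  have inj: "inj_on (\<lambda>j. 2*m+1-j) {1..m}" by (auto simp: inj_on_def)
  have "(\<Prod>j\<in>{1..2*m}. f j) = (\<Prod>j\<in>{1..m}. f j) * (\<Prod>j\<in>{m+1..2*m}. f j)"
    unfolding U by (rule prod.union_disjoint) auto
  also have "(\<Prod>j\<in>{m+1..2*m}. f j) = (\<Prod>j\<in>{1..m}. f (2*m+1-j))"
    unfolding I prod.reindex[OF inj] o_def by (rule refl)
  finally show ?thesis by (simp add: prod.distrib)
qed

lemma sf_prod: "int (superfactorial n) = (\<Prod>j\<in>{1..n}. int j ^ (n+1-j))"
proof (induction n)
  case 0 then show ?case by (simp add: superfactorial_def)
next
  case (Suc n)
  have "int (superfactorial (Suc n)) = int (superfactorial n) * fact (Suc n)"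
    by (simp add: superfactorial_def of_nat_prod algebra_simps)
  also have "fact (Suc n) = (\<Prod>j\<in>{1..Suc n}. int j)"
    by (simp only: fact_prod of_nat_prod)
  also have "int (superfactorial n) = (\<Prod>j\<in>{1..Suc n}. int j ^ (n+1-j))"
    using Suc by (simp add: prod.cl_ivl_Suc)
  finally have "int (superfactorial (Suc n)) = (\<Prod>j\<in>{1..Suc n}. int j ^ (n+1-j) * int j)"
    by (simp add: prod.distrib del: of_nat_Suc)
  also have "\<dots> = (\<Prod>j\<in>{1..Suc n}. int j ^ (Suc n+1-j))"
    by (rule prod.cong) (auto simp: Suc_diff_le)
  finally show ?case .
qed

lemma hf_prod: "int (hyperfactorial n) = (\<Prod>j\<in>{1..n}. int j ^ j)"
  by (simp add: hyperfactorial_def of_nat_prod)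

lemma df_prod: "int (double_factorial (2*m)) = (\<Prod>j\<in>{1..2*m}. if even j then int j else 1)"
proof -
  have "double_factorial (2*m) = (\<Prod>k \<in> {k \<in> {1..2*m}. even k}. k)"
    by (simp add: double_factorial_def)
  also have "\<dots> = (\<Prod>k\<in>{1..2*m}. if even k then k else 1)"
    by (rule prod.inter_filter) simp
  finally show ?thesis by (simp add: of_nat_prod if_distrib cong: if_cong)
qed

lemma neg_cong: "j \<le> p \<Longrightarrow> [int (p - j) = - int j] (mod int p)"
  by (simp add: cong_def of_nat_diff mod_simps)

lemma pmi: "(- int x) ^ n = (-1)^n * int x ^ n" by (metis mult_minus1 power_mult_distrib)

theorem theorem2:
  fixes p :: nat
  assumes "prime p" and "odd p"
  shows "[int (double_factorial (p - 1)) = int (superfactorial (p - 1))] (mod int p)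
       \<and> [int (superfactorial (p - 1)) = (-1) ^ ((p - 1) div 2) * int (hyperfactorial (p - 1))] (mod int p)"
proof -
  obtain m where pm: "p = 2*m+1" using assms(2) by (rule oddE)
  have pm1: "p - 1 = 2*m" "(p-1) div 2 = m" using pm by auto
  define P where "P = int p"
  have D: "[int (double_factorial (p-1)) = (\<Prod>j\<in>{1..m}. (-1)^j * int j)] (mod P)"
  proof -
    have "int (double_factorial (p-1)) = (\<Prod>j\<in>{1..m}. (if even j then int j else 1) *
            (if even (2*m+1-j) then int (2*m+1-j) else 1))"
      unfolding pm1 df_prod by (rule pair_prod)
    also have "[\<dots> = (\<Prod>j\<in>{1..m}. (-1)^j * int j)] (mod P)"
    proof (rule cong_prod)
      fix j assume j: "j \<in> {1..m}"
      show "[(if even j then int j else 1) * (if even (2*m+1-j) then int (2*m+1-j) else 1)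
             = (-1)^j * int j] (mod P)"
      proof (cases "even j")
        case True
        then have "odd (2*m+1-j)" using j by auto
        with True show ?thesis by simp
      next
        case False
        then have "even (2*m+1-j)" using j by auto
        moreover have "[int (p - j) = - int j] (mod P)" unfolding P_def using j pm by (intro neg_cong) auto
        ultimately show ?thesis using False pm by simp
      qed
    qed
    finally show ?thesis .
  qed
  have S: "[int (superfactorial (p-1)) = (\<Prod>j\<in>{1..m}. (-1)^j * int j ^ p)] (mod P)"
  proof -
    have "int (superfactorial (p-1)) = (\<Prod>j\<in>{1..m}. int j ^ (2*m+1-j) * int (2*m+1-j) ^ (2*m+1-(2*m+1-j)))"
      unfolding pm1 sf_prod by (rule pair_prod)
    also have "[\<dots> = (\<Prod>j\<in>{1..m}. (-1)^j * int j ^ p)] (mod P)"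
    proof (rule cong_prod)
      fix j assume j: "j \<in> {1..m}"
      have c: "[int (p - j) = - int j] (mod P)" unfolding P_def using j pm by (intro neg_cong) auto
      have e: "2*m+1-(2*m+1-j) = j" using j by auto
      have "[int j ^ (p-j) * int (p-j) ^ j = int j ^ (p-j) * (- int j) ^ j] (mod P)"
        by (rule cong_mult[OF cong_refl cong_pow[OF c]])
      also have "int j ^ (p-j) * (- int j) ^ j = (-1)^j * int j ^ (p - j + j)"
        by (simp only: pmi power_add mult_ac)
      also have "p - j + j = p" using j pm by auto
      finally show "[int j ^ (2*m+1-j) * int (2*m+1-j) ^ (2*m+1-(2*m+1-j)) = (-1)^j * int j ^ p] (mod P)"
        using e pm by simp
    qed
    finally show ?thesis .
  qed
  have H: "[int (hyperfactorial (p-1)) = (\<Prod>j\<in>{1..m}. - ((-1)^j * int j ^ p))] (mod P)"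
  proof -
    have "int (hyperfactorial (p-1)) = (\<Prod>j\<in>{1..m}. int j ^ j * int (2*m+1-j) ^ (2*m+1-j))"
      unfolding pm1 hf_prod by (rule pair_prod)
    also have "[\<dots> = (\<Prod>j\<in>{1..m}. - ((-1)^j * int j ^ p))] (mod P)"
    proof (rule cong_prod)
      fix j assume j: "j \<in> {1..m}"
      have c: "[int (p - j) = - int j] (mod P)" unfolding P_def using j pm by (intro neg_cong) auto
      have e: "j + (p - j) = p" using j pm by auto
      have par: "even (p - j) \<longleftrightarrow> odd j" using j pm by auto
      have s: "(-1::int)^(p-j) = - ((-1)^j)" unfolding minus_one_power_iff par by simp
      have "[int j ^ j * int (p-j) ^ (p-j) = int j ^ j * (- int j) ^ (p-j)] (mod P)"
        by (rule cong_mult[OF cong_refl cong_pow[OF c]])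
      moreover have "int j ^ j * (- int j) ^ (p-j) = (-1)^(p-j) * int j ^ (j + (p - j))"
        by (simp only: pmi power_add mult_ac)
      ultimately have "[int j ^ j * int (p-j) ^ (p-j) = - ((-1)^j * int j ^ p)] (mod P)"
        by (simp only: e s minus_mult_left)
      then show "[int j ^ j * int (2*m+1-j) ^ (2*m+1-j) = - ((-1)^j * int j ^ p)] (mod P)"
        using pm by simp
    qed
    finally show ?thesis .
  qed
  have F: "[(\<Prod>j\<in>{1..m}. (-1)^j * int j ^ p) = (\<Prod>j\<in>{1..m}. (-1)^j * int j)] (mod P)"
  proof (rule cong_prod)
    fix j assume j: "j \<in> {1..m}"
    have nd: "\<not> p dvd j" using j pm by (auto dest: dvd_imp_le)
    have "[j ^ (p-1) = 1] (mod p)" by (rule fermat_theorem[OF assms(1) nd])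
    then have "[j ^ (p-1) * j = 1 * j] (mod p)" by (rule cong_mult[OF _ cong_refl])
    moreover have "j ^ (p-1) * j = j ^ p" using pm by (simp add: power_Suc2[symmetric])
    ultimately have "[j ^ p = j] (mod p)" by simp
    then have "[int j ^ p = int j] (mod P)" unfolding P_def by (metis cong_int_iff of_nat_power)
    then show "[(-1)^j * int j ^ p = (-1)^j * int j] (mod P)" by (rule cong_mult[OF cong_refl])
  qed
  have part1: "[int (double_factorial (p - 1)) = int (superfactorial (p - 1))] (mod P)"
    using D S F by (meson cong_sym cong_trans)
  have "(\<Prod>j\<in>{1..m}. - ((-1::int)^j * int j ^ p)) = (-1)^m * (\<Prod>j\<in>{1..m}. (-1)^j * int j ^ p)"
    by (simp add: prod_uminus)
  then have "[(-1) ^ m * int (hyperfactorial (p-1)) = (-1)^m * ((-1)^m * (\<Prod>j\<in>{1..m}. (-1)^j * int j ^ p))] (mod P)"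
    using H by (metis cong_scalar_left)
  also have "(-1::int)^m * ((-1)^m * X) = X" for X
    by (simp add: mult.assoc[symmetric])
  finally have part2: "[int (superfactorial (p - 1)) = (-1) ^ ((p - 1) div 2) * int (hyperfactorial (p - 1))] (mod P)"
    using S pm1 by (meson cong_sym cong_trans)
  show ?thesis using part1 part2 unfolding P_def by simp
qed

end
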